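(* Let $\lambda\in\mathbb R$ with $\alpha=1-\lambda>0$, and let $\mathcal Q_\lambda$ be a $\lambda$-exponential family satisfying Assumptions A and B. Let $x_1,\dots,x_N\in\mathcal X$ satisfy $x_i\in S_\vartheta$ for all $i$ and all $\vartheta\in\operatorname{dom}\varphi_\lambda$. Let $J\ge1$, weights $\xi_{k,1},\dots,\xi_{k,J}\ge0$ summing to $1$ and parameters $\vartheta_{k,1},\dots,\vartheta_{k,J}\in\operatorname{dom}\varphi_\lambda$, and for $j\in\{1,\dots,J\}$ define $\gamma_{k,j}(x)=\frac{\xi_{k,j}q_{\vartheta_{k,j}}(x)}{\sum_{j'=1}^J\xi_{k,j'}q_{\vartheta_{k,j'}}(x)}$. Fix $j$, assume $\sum_{i'}\gamma_{k,j}(x_{i'})>0$, set $w_i=\gamma_{k,j}(x_i)/\sum_{i'=1}^N\gamma_{k,j}(x_{i'})$ and $\bar T=\sum_{i=1}^Nw_iT(x_i)$, and suppose there exists $\vartheta_{k+1,j}\in\operatorname{dom}\varphi_\lambda$ with $q^{(\alpha)}_{\vartheta_{k+1,j}}(T)=\bar T$. Let $F(\vartheta)=\sum_{i=1}^N\gamma_{k,j}(x_i)\log q_\vartheta(x_i)$. (i) If $\lambda=0$, $\vartheta_{k+1,j}$ maximizes $F$ over $\operatorname{dom}\varphi_\lambda$. (ii) If $\lambda<0$ (resp. $\lambda>0$), $\vartheta_{k+1,j}$ maximizes over $\operatorname{dom}\varphi_\lambda$ the function $\vartheta\mapsto\big(\sum_{i'}\gamma_{k,j}(x_{i'})\big)\big(c_\lambda(\vartheta,\bar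 T)-\varphi_\lambda(\vartheta)\big)$, which is a lower bound (resp. upper bound) of $F$ on $\operatorname{dom}\varphi_\lambda$.
   Context: $\mathcal H$ is a finite-dimensional real Hilbert space; $\mathcal X$ a measurable space with measure $m$; $p(f)=\int fp\,dm$. Conventions $\log s=-\infty$ for $s\le0$, $\exp(-\infty)=0$. Coupling $c_\lambda(u,v)=\frac1\lambda\log(1+\lambda\langle u,v\rangle)$ ($\lambda\ne0$), $c_0=\langle\cdot,\cdot\rangle$. For measurable $T:\mathcal X\to\mathcal H$: $\varphi_\lambda(\vartheta)=\log\int\exp(c_\lambda(\vartheta,T))dm$, $\operatorname{dom}\varphi_\lambda=\{\varphi_\lambda<+\infty\}$, $q_\vartheta=\exp(c_\lambda(\vartheta,T)-\varphi_\lambda(\vartheta))$, $\mathcal Q_\lambda=\{q_\vartheta:\vartheta\in\operatorname{dom}\varphi_\lambda\}$, support $S_\vartheta=\{x:1+\lambda\langle\vartheta,T(x)\rangle>0\}$. Escort $p^{(\alpha)}=p^\alpha/\int p^\alpha dm$; $p_{|Y}=p\mathbf 1_Y$. Compatibility: $p$ is $q_\vartheta$-compatible if $\int p_{|S_\vartheta}^\alpha dm\in(0,\infty)$ and $\int Tp_{|S_\vartheta}^\alpha dm$ has finite components; $\mathcal Q_\lambda$-compatible if for every $\vartheta\in\operatorname{dom}\varphi_\lambda$. Assumption A: $\alpha>0$ and $\varphi_\lambda$ proper (never $-\infty$, nonempty domain). Assumption B: there is a nonempty $S_\lambda$ with $S_\vartheta=S_\lambda$ for all $\vartheta\in\operatorname{dom}\varphi_\lambda$,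 and each $q_\vartheta\in\mathcal Q_\lambda$ is $\mathcal Q_\lambda$-compatible. *)

theory Defs
  imports "HOL-Analysis.Analysis"
begin

definition clam :: "real \<Rightarrow> 'h::euclidean_space \<Rightarrow> 'h \<Rightarrow> ereal" where
  "clam l u v = (if l = 0 then ereal (inner u v)
     else if 1 + l * inner u v > 0 then ereal (ln (1 + l * inner u v) / l) else -\<infinity>)"

definition expc :: "real \<Rightarrow> 'h::euclidean_space \<Rightarrow> 'h \<Rightarrow> real" where
  "expc l u v = (case clam l u v of ereal r \<Rightarrow> exp r | _ \<Rightarrow> 0)"

definition phi :: "'x measure \<Rightarrow> ('x \<Rightarrow> 'h::euclidean_space) \<Rightarrow> real \<Rightarrow> 'h \<Rightarrow> ereal" where
  "phi M T l th = (let I = (\<integral>\<^sup>+ x. ennreal (expc l th (T x)) \<partial>M) in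
     if I = \<infinity> then \<infinity> else if I = 0 then -\<infinity> else ereal (ln (enn2real I)))"

definition dom_phi :: "'x measure \<Rightarrow> ('x \<Rightarrow> 'h::euclidean_space) \<Rightarrow> real \<Rightarrow> 'h set" where
  "dom_phi M T l = {th. phi M T l th < \<infinity>}"

text \<open>The density q_theta = exp(c_lambda(theta,T) - phi_lambda(theta)) (for theta in the domain, phi finite).\<close>
definition qdens :: "'x measure \<Rightarrow> ('x \<Rightarrow> 'h::euclidean_space) \<Rightarrow> real \<Rightarrow> 'h \<Rightarrow> 'x \<Rightarrow> real" where
  "qdens M T l th x = expc l th (T x) / exp (real_of_ereal (phi M T l th))"

definition supp :: "'x measure \<Rightarrow> ('x \<Rightarrow> 'h::euclidean_space) \<Rightarrow> real \<Rightarrow> 'h \<Rightarrow> 'x set" where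
  "supp M T l th = {x \<in> space M. 1 + l * inner th (T x) > 0}"

definition compat :: "'x measure \<Rightarrow> ('x \<Rightarrow> 'h::euclidean_space) \<Rightarrow> real \<Rightarrow> real \<Rightarrow> ('x \<Rightarrow> real) \<Rightarrow> 'h \<Rightarrow> bool" where
  "compat M T l a p th \<longleftrightarrow>
     (let pS = (\<lambda>x. p x * indicator (supp M T l th) x) in
       (\<integral>\<^sup>+ x. ennreal ((pS x) powr a) \<partial>M) \<noteq> 0 \<and>
       (\<integral>\<^sup>+ x. ennreal ((pS x) powr a) \<partial>M) \<noteq> \<infinity> \<and>
       integrable M (\<lambda>x. ((pS x) powr a) *\<^sub>R T x))"

definition assumptionA :: "'x measure \<Rightarrow> ('x \<Rightarrow> 'h::euclidean_space) \<Rightarrow> real \<Rightarrow> real \<Rightarrow> bool" where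
  "assumptionA M T l a \<longleftrightarrow> a > 0 \<and> (\<forall>th. phi M T l th \<noteq> -\<infinity>) \<and> dom_phi M T l \<noteq> {}"

definition assumptionB :: "'x measure \<Rightarrow> ('x \<Rightarrow> 'h::euclidean_space) \<Rightarrow> real \<Rightarrow> real \<Rightarrow> bool" where
  "assumptionB M T l a \<longleftrightarrow>
     (\<exists>S0. S0 \<noteq> {} \<and> (\<forall>th \<in> dom_phi M T l. supp M T l th = S0)) \<and>
     (\<forall>th \<in> dom_phi M T l. \<forall>th' \<in> dom_phi M T l. compat M T l a (qdens M T l th) th')"

definition escort_mean :: "'x measure \<Rightarrow> ('x \<Rightarrow> 'h::euclidean_space) \<Rightarrow> real \<Rightarrow> real \<Rightarrow> 'h \<Rightarrow> 'h" where
  "escort_mean M T l a th =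
     (1 / (\<integral>x. (qdens M T l th x) powr a \<partial>M)) *\<^sub>R (\<integral>x. ((qdens M T l th x) powr a) *\<^sub>R T x \<partial>M)"

end

theory Submission
  imports Defs
begin

lemma bern_powr:
  fixes t p :: real
  assumes t: "t > 0" and p: "p \<ge> 1 \<or> p \<le> 0"
  shows "t powr p \<ge> 1 + p * (t - 1)"
proof (cases "p \<ge> 1")
  case True
  have "t powr p - 1 powr p \<ge> p * (t - 1)"
  proof (rule convex_on_imp_above_tangent[OF powr_convex[OF True]])
    show "connected {0::real<..}" by simp
    show "(1::real) \<in> interior {0<..}" by (simp add: interior_open)
    show "t \<in> {0<..}" using t by simp
    show "((\<lambda>x. x powr p) has_field_derivative p) (at 1 within {0<..})"
      by (rule derivative_eq_intros | simp)+
  qed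
  then show ?thesis by simp
next
  case False
  then have p0: "p \<le> 0" using p by simp
  have "t powr p = exp (p * ln t)" using t by (simp add: powr_def)
  also have "\<dots> \<ge> 1 + p * ln t" by (rule exp_ge_add_one_self)
  finally have 1: "t powr p \<ge> 1 + p * ln t" .
  have "ln t \<le> t - 1" using t by (rule ln_le_minus_one)
  then have "p * ln t \<ge> p * (t - 1)" using p0 by (simp add: mult_left_mono_neg)
  with 1 show ?thesis by linarith
qed

lemma expc_eq: "expc l th v = (if l = 0 then exp (inner th v)
   else if 1 + l * inner th v > 0 then (1 + l * inner th v) powr (1/l) else 0)"
  by (auto simp: expc_def clam_def powr_def)

lemma expc_meas:
  fixes T :: "'x \<Rightarrow> 'h::euclidean_space"
  assumes "T \<in> borel_measurable M"
  shows "(\<lambda>x. expc l th (T x)) \<in> borel_measurable M"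
  unfolding expc_eq using assms by measurable

lemma dom_facts:
  fixes T :: "'x \<Rightarrow> 'h::euclidean_space"
  assumes Tm: "T \<in> borel_measurable M" and A: "assumptionA M T l a"
    and th: "th \<in> dom_phi M T l"
  shows "integrable M (\<lambda>x. expc l th (T x))"
    and "(\<integral>x. expc l th (T x) \<partial>M) > 0"
    and "phi M T l th = ereal (ln (\<integral>x. expc l th (T x) \<partial>M))"
    and "\<And>x. qdens M T l th x = expc l th (T x) / (\<integral>x. expc l th (T x) \<partial>M)"
proof -
  define I where "I = (\<integral>\<^sup>+ x. ennreal (expc l th (T x)) \<partial>M)"
  have nn: "\<And>v. expc l th v \<ge> 0" by (simp add: expc_eq)
  have m: "(\<lambda>x. expc l th (T x)) \<in> borel_measurable M" using Tm by (rule expc_meas)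
  have ph: "phi M T l th = (if I = \<infinity> then \<infinity> else if I = 0 then -\<infinity> else ereal (ln (enn2real I)))"
    by (simp add: phi_def I_def Let_def)
  have "phi M T l th < \<infinity>" using th by (simp add: dom_phi_def)
  then have Ifin: "I \<noteq> \<infinity>" using ph by auto
  have "phi M T l th \<noteq> -\<infinity>" using A by (simp add: assumptionA_def)
  then have I0: "I \<noteq> 0" using ph Ifin by auto
  have eq: "(\<integral>x. expc l th (T x) \<partial>M) = enn2real I"
    unfolding I_def by (rule integral_eq_nn_integral[OF m]) (simp add: nn)
  show "integrable M (\<lambda>x. expc l th (T x))"
    using m nn Ifin by (intro integrableI_nonneg) (auto simp: I_def top.not_eq_extremum)
  show pos: "(\<integral>x. expc l th (T x) \<partial>M) > 0"
    using Ifin I0 by (simp add: eq enn2real_positive_iff top.not_eq_extremum zero_less_iff_neq_zero)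
  show ph2: "phi M T l th = ereal (ln (\<integral>x. expc l th (T x) \<partial>M))"
    using ph Ifin I0 eq by simp
  show "\<And>x. qdens M T l th x = expc l th (T x) / (\<integral>x. expc l th (T x) \<partial>M)"
    using pos by (simp add: qdens_def ph2)
qed

lemma core_nz:
  fixes T :: "'x \<Rightarrow> 'h::euclidean_space"
  assumes Tm: "T \<in> borel_measurable M" and A: "assumptionA M T l a"
    and l0: "l \<noteq> 0" and aeq: "a = 1 - l" and apos: "a > 0"
    and th: "th \<in> dom_phi M T l" and thn: "thn \<in> dom_phi M T l"
    and seq: "supp M T l th = supp M T l thn"
    and comp: "compat M T l a (qdens M T l thn) thn"
    and pos: "1 + l * inner th (escort_mean M T l a thn) > 0"
    and posn: "1 + l * inner thn (escort_mean M T l a thn) > 0"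
  shows "ln (1 + l * inner th (escort_mean M T l a thn)) / l - ln (\<integral>x. expc l th (T x) \<partial>M)
       \<le> ln (1 + l * inner thn (escort_mean M T l a thn)) / l - ln (\<integral>x. expc l thn (T x) \<partial>M)"
proof -
  define eta where "eta = escort_mean M T l a thn"
  define en where "en = (\<lambda>x. expc l thn (T x))"
  define e where "e = (\<lambda>x. expc l th (T x))"
  define u where "u = (\<lambda>x. 1 + l * inner thn (T x))"
  define v where "v = (\<lambda>x. 1 + l * inner th (T x))"
  define Zn where "Zn = (\<integral>x. en x \<partial>M)"
  define Zt where "Zt = (\<integral>x. e x \<partial>M)"
  define p where "p = 1 / l"
  define c0 where "c0 = 1 / Zn powr a"
  define g where "g = (\<lambda>x. c0 * en x / u x)"
  note fn = dom_facts[OF Tm A thn, folded en_def, folded Zn_def]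
  note ft = dom_facts[OF Tm A th, folded e_def, folded Zt_def]
  have Znpos: "Zn > 0" using fn(2) by simp
  have Ztpos: "Zt > 0" using ft(2) by simp
  have c0pos: "c0 > 0" using Znpos by (simp add: c0_def)
  have uv: "u x > 0 \<longleftrightarrow> v x > 0" if "x \<in> space M" for x
  proof -
    have "x \<in> supp M T l th \<longleftrightarrow> x \<in> supp M T l thn" using seq by simp
    then show ?thesis using that by (simp add: supp_def u_def v_def)
  qed
  have en_eq: "en x = (if u x > 0 then u x powr p else 0)" for x
    using l0 by (simp add: en_def u_def expc_eq p_def)
  have e_eq: "e x = (if v x > 0 then v x powr p else 0)" for x
    using l0 by (simp add: e_def v_def expc_eq p_def)
  have pa: "p * a = p - 1" using l0 by (simp add: p_def aeq field_simps)
  have w_eq: "(qdens M T l thn x * indicator (supp M T l thn) x) powr a = g x"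
    and w_eq2: "(qdens M T l thn x) powr a = g x" if x: "x \<in> space M" for x
  proof -
    have q: "qdens M T l thn x = en x / Zn" using fn(4) by (simp add: en_def Zn_def)
    have "(qdens M T l thn x) powr a = g x \<and> (qdens M T l thn x * indicator (supp M T l thn) x) powr a = g x"
    proof (cases "u x > 0")
      case True
      then have ins: "x \<in> supp M T l thn" using x by (simp add: supp_def u_def)
      have "(en x / Zn) powr a = (u x powr p) powr a / Zn powr a"
        using True by (simp add: en_eq powr_divide Znpos less_imp_le)
      also have "\<dots> = u x powr (p - 1) / Zn powr a" by (simp add: powr_powr pa)
      also have "\<dots> = c0 * en x / u x" using True
        by (simp add: powr_diff en_eq c0_def)
      finally show ?thesis using ins by (simp add: q g_def)
    next
      case False
      then have "x \<notin> supp M T l thn" by (simp add: supp_def u_def)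
      then show ?thesis using False by (simp add: q g_def en_eq)
    qed
    then show "(qdens M T l thn x) powr a = g x"
      "(qdens M T l thn x * indicator (supp M T l thn) x) powr a = g x" by auto
  qed
  have gu: "g x * u x = c0 * en x" for x
    by (cases "u x > 0") (auto simp: g_def en_eq)
  have gnn: "g x \<ge> 0" for x
    by (cases "u x > 0") (auto simp: g_def en_eq c0pos less_imp_le)
  have enm: "en \<in> borel_measurable M" unfolding en_def using Tm by (rule expc_meas)
  have um: "u \<in> borel_measurable M" unfolding u_def using Tm by measurable
  have vm: "v \<in> borel_measurable M" unfolding v_def using Tm by measurable
  have gm: "g \<in> borel_measurable M" unfolding g_def using enm um by measurable
  have compU: "(\<integral>\<^sup>+ x. ennreal ((qdens M T l thn x * indicator (supp M T l thn) x) powr a) \<partial>M) \<noteq> 0"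
    "(\<integral>\<^sup>+ x. ennreal ((qdens M T l thn x * indicator (supp M T l thn) x) powr a) \<partial>M) \<noteq> \<infinity>"
    "integrable M (\<lambda>x. ((qdens M T l thn x * indicator (supp M T l thn) x) powr a) *\<^sub>R T x)"
    using comp by (simp_all add: compat_def Let_def)
  have nneq: "(\<integral>\<^sup>+ x. ennreal ((qdens M T l thn x * indicator (supp M T l thn) x) powr a) \<partial>M)
      = (\<integral>\<^sup>+ x. ennreal (g x) \<partial>M)"
    by (rule nn_integral_cong) (simp add: w_eq)
  have "integrable M (\<lambda>x. g x *\<^sub>R T x) \<longleftrightarrow> integrable M (\<lambda>x. ((qdens M T l thn x * indicator (supp M T l thn) x) powr a) *\<^sub>R T x)"
    by (rule Bochner_Integration.integrable_cong) (simp_all add: w_eq)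
  then have gTi: "integrable M (\<lambda>x. g x *\<^sub>R T x)" using compU(3) by simp
  have gi: "integrable M g"
    using compU(2) nneq gm gnn by (intro integrableI_nonneg) (auto simp: top.not_eq_extremum)
  define Ag where "Ag = (\<integral>x. g x \<partial>M)"
  define Vg where "Vg = (\<integral>x. g x *\<^sub>R T x \<partial>M)"
  have Ageq: "Ag = enn2real (\<integral>\<^sup>+ x. ennreal (g x) \<partial>M)"
    unfolding Ag_def by (rule integral_eq_nn_integral[OF gm]) (simp add: gnn)
  have Agpos: "Ag > 0"
    using compU(1,2) nneq by (simp add: Ageq enn2real_positive_iff top.not_eq_extremum zero_less_iff_neq_zero)
  have eta_eq: "eta = (1 / Ag) *\<^sub>R Vg"
  proof -
    have "(\<integral>x. (qdens M T l thn x) powr a \<partial>M) = Ag"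
      unfolding Ag_def by (rule Bochner_Integration.integral_cong) (simp_all add: w_eq2)
    moreover have "(\<integral>x. ((qdens M T l thn x) powr a) *\<^sub>R T x \<partial>M) = Vg"
      unfolding Vg_def by (rule Bochner_Integration.integral_cong) (simp_all add: w_eq2)
    ultimately show ?thesis by (simp add: eta_def escort_mean_def)
  qed
  have lin: "integrable M (\<lambda>x. g x * (1 + l * inner ph (T x)))"
     "(\<integral>x. g x * (1 + l * inner ph (T x)) \<partial>M) = Ag * (1 + l * inner ph eta)" for ph
  proof -
    have pw: "g x * (1 + l * inner ph (T x)) = g x + l * inner ph (g x *\<^sub>R T x)" for x
      by (simp add: algebra_simps)
    show "integrable M (\<lambda>x. g x * (1 + l * inner ph (T x)))"
      unfolding pw using gi gTi by (intro Bochner_Integration.integrable_add integrable_mult_right integrable_inner_right) auto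
    have "(\<integral>x. g x * (1 + l * inner ph (T x)) \<partial>M) = Ag + l * inner ph Vg"
    proof -
      have i2: "integrable M (\<lambda>x. l * inner ph (g x *\<^sub>R T x))"
        using gTi by (intro integrable_mult_right integrable_inner_right) auto
      have "(\<integral>x. g x + l * inner ph (g x *\<^sub>R T x) \<partial>M) = Ag + (\<integral>x. l * inner ph (g x *\<^sub>R T x) \<partial>M)"
        unfolding Ag_def by (rule Bochner_Integration.integral_add[OF gi i2])
      also have "(\<integral>x. l * inner ph (g x *\<^sub>R T x) \<partial>M) = l * inner ph Vg"
        unfolding Vg_def using gTi by (simp del: inner_scaleR_right)
      finally show ?thesis unfolding pw .
    qed
    also have "\<dots> = Ag * (1 + l * inner ph eta)" using Agpos by (simp add: eta_eq field_simps)
    finally show "(\<integral>x. g x * (1 + l * inner ph (T x)) \<partial>M) = Ag * (1 + l * inner ph eta)" .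
  qed
  define K where "K = (\<integral>x. g x * v x \<partial>M)"
  have Keq: "K = Ag * (1 + l * inner th eta)" using lin(2)[of th] by (simp add: K_def v_def)
  have Kn: "c0 * Zn = Ag * (1 + l * inner thn eta)"
  proof -
    have "(\<integral>x. g x * (1 + l * inner thn (T x)) \<partial>M) = (\<integral>x. c0 * en x \<partial>M)"
      using gu by (simp add: u_def)
    then show ?thesis using lin(2)[of thn] by (simp add: Zn_def)
  qed
  define R where "R = K / (c0 * Zn)"
  have Rpos: "R > 0" using Keq Kn pos posn Agpos c0pos Znpos
    by (simp add: R_def eta_def)
  have KR: "K = R * (c0 * Zn)" using c0pos Znpos by (simp add: R_def)
  have pp: "p \<ge> 1 \<or> p \<le> 0"
  proof (cases "l > 0")
    case True
    then have "l < 1" using apos aeq by simp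
    then show ?thesis using True by (simp add: p_def)
  next
    case False
    then show ?thesis using l0 by (simp add: p_def)
  qed
  define rhs where "rhs = (\<lambda>x. (R powr p * (1 - p)) * en x + (R powr p * p / (c0 * R)) * (g x * v x))"
  have pt: "rhs x \<le> e x" if x: "x \<in> space M" for x
  proof (cases "u x > 0")
    case True
    then have vp: "v x > 0" using uv[OF x] by simp
    define t where "t = v x / (u x * R)"
    have tpos: "t > 0" using vp True Rpos by (simp add: t_def)
    have vt: "v x = u x * R * t" using True Rpos by (simp add: t_def)
    have b: "t powr p \<ge> 1 + p * (t - 1)" using bern_powr[OF tpos pp] .
    have "e x = u x powr p * R powr p * t powr p"
      using vp True Rpos tpos by (simp add: e_eq vt powr_mult)
    moreover have "rhs x = u x powr p * R powr p * (1 + p * (t - 1))"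
      using True c0pos Rpos by (simp add: rhs_def g_def en_eq t_def field_simps)
    moreover have "u x powr p * R powr p \<ge> 0" by simp
    ultimately show ?thesis using b by (metis mult_left_mono)
  next
    case False
    then have "\<not> v x > 0" using uv[OF x] by simp
    then show ?thesis using False by (simp add: rhs_def e_eq g_def en_eq)
  qed
  have eni: "integrable M en" using fn(1) by (simp add: en_def)
  have gvi: "integrable M (\<lambda>x. g x * v x)" using lin(1)[of th] by (simp add: v_def)
  have rhsi: "integrable M rhs" unfolding rhs_def using eni gvi by auto
  have "(\<integral>x. rhs x \<partial>M) = (R powr p * (1 - p)) * Zn + (R powr p * p / (c0 * R)) * K"
    unfolding rhs_def Zn_def K_def using eni gvi by simp
  also have "\<dots> = R powr p * Zn" using KR c0pos Rpos by (simp add: field_simps)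
  finally have "R powr p * Zn \<le> Zt"
    using integral_mono[OF rhsi _ pt] ft(1) by (simp add: Zt_def e_def)
  then have "ln (R powr p * Zn) \<le> ln Zt" using Rpos Znpos Ztpos by (subst ln_le_cancel_iff) auto
  then have ineq: "p * ln R + ln Zn \<le> ln Zt" using Rpos Znpos by (simp add: ln_mult)
  have r1: "1 + l * inner th eta = K / Ag" using Keq Agpos by simp
  have r2: "1 + l * inner thn eta = c0 * Zn / Ag" using Kn Agpos by simp
  have Kpos: "K > 0" using r1 pos Agpos unfolding eta_def by (simp add: zero_less_divide_iff)
  have "ln (1 + l * inner th eta) / l - ln (1 + l * inner thn eta) / l = p * ln R"
    using Kpos Agpos c0pos Znpos
    by (simp add: r1 r2 R_def p_def ln_div diff_divide_distrib)
  then show ?thesis using ineq unfolding eta_def Zt_def Zn_def e_def en_def by linarith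
qed

lemma core_z:
  fixes T :: "'x \<Rightarrow> 'h::euclidean_space"
  assumes Tm: "T \<in> borel_measurable M" and A: "assumptionA M T 0 a"
    and aeq: "a = 1"
    and th: "th \<in> dom_phi M T 0" and thn: "thn \<in> dom_phi M T 0"
    and comp: "compat M T 0 a (qdens M T 0 thn) thn"
  shows "inner th (escort_mean M T 0 a thn) - ln (\<integral>x. expc 0 th (T x) \<partial>M)
       \<le> inner thn (escort_mean M T 0 a thn) - ln (\<integral>x. expc 0 thn (T x) \<partial>M)"
proof -
  define eta where "eta = escort_mean M T 0 a thn"
  define en where "en = (\<lambda>x. expc 0 thn (T x))"
  define e where "e = (\<lambda>x. expc 0 th (T x))"
  define Zn where "Zn = (\<integral>x. en x \<partial>M)"
  define Zt where "Zt = (\<integral>x. e x \<partial>M)"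
  note fn = dom_facts[OF Tm A thn, folded en_def, folded Zn_def]
  note ft = dom_facts[OF Tm A th, folded e_def, folded Zt_def]
  have Znpos: "Zn > 0" using fn(2) by simp
  have Ztpos: "Zt > 0" using ft(2) by simp
  have en_eq: "en x = exp (inner thn (T x))" for x by (simp add: en_def expc_eq)
  have e_eq: "e x = exp (inner th (T x))" for x by (simp add: e_def expc_eq)
  have q: "qdens M T 0 thn x = en x / Zn" for x using fn(4) by (simp add: en_def Zn_def)
  have qa: "(qdens M T 0 thn x) powr a = en x / Zn" for x
    using Znpos by (simp add: q aeq en_eq)
  have qai: "(qdens M T 0 thn x * indicator (supp M T 0 thn) x) powr a = en x / Zn"
    if "x \<in> space M" for x using that qa by (simp add: supp_def)
  have "integrable M (\<lambda>x. ((qdens M T 0 thn x * indicator (supp M T 0 thn) x) powr a) *\<^sub>R T x)"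
    using comp by (simp add: compat_def Let_def)
  moreover have "integrable M (\<lambda>x. (en x / Zn) *\<^sub>R T x) \<longleftrightarrow> integrable M (\<lambda>x. ((qdens M T 0 thn x * indicator (supp M T 0 thn) x) powr a) *\<^sub>R T x)"
    by (rule Bochner_Integration.integrable_cong) (simp_all add: qai)
  ultimately have wTi: "integrable M (\<lambda>x. (en x / Zn) *\<^sub>R T x)" by simp
  have eni: "integrable M en" using fn(1) by (simp add: en_def)
  define V where "V = (\<integral>x. (en x / Zn) *\<^sub>R T x \<partial>M)"
  have A1: "(\<integral>x. en x / Zn \<partial>M) = 1" using Znpos by (simp add: Zn_def)
  have eta_eq: "eta = V" unfolding eta_def escort_mean_def qa V_def A1 by simp
  define m where "m = inner (th - thn) eta"
  define D where "D = (\<lambda>x. inner (th - thn) (T x))"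
  have enD: "en x * D x = Zn * inner (th - thn) ((en x / Zn) *\<^sub>R T x)" for x
    using Znpos by (simp add: D_def)
  have enDi: "integrable M (\<lambda>x. en x * D x)"
    unfolding enD using wTi by (intro integrable_mult_right integrable_inner_right) auto
  have enDint: "(\<integral>x. en x * D x \<partial>M) = Zn * m"
  proof -
    have "(\<integral>x. en x * D x \<partial>M) = Zn * inner (th - thn) V"
      unfolding enD V_def using wTi by (simp del: inner_scaleR_right)
    then show ?thesis by (simp add: m_def eta_eq)
  qed
  define rhs where "rhs = (\<lambda>x. (exp m * (1 - m)) * en x + exp m * (en x * D x))"
  have pt: "rhs x \<le> e x" for x
  proof -
    have "exp (D x - m) \<ge> 1 + (D x - m)" by (rule exp_ge_add_one_self)
    then have "exp m * (1 + (D x - m)) \<le> exp m * exp (D x - m)" by simp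
    also have "\<dots> = exp (D x)" by (simp add: exp_diff)
    finally have "en x * (exp m * (1 + (D x - m))) \<le> en x * exp (D x)"
      by (simp add: en_eq)
    also have "\<dots> = e x" by (simp add: en_eq e_eq D_def inner_diff_left exp_diff)
    finally show ?thesis by (simp add: rhs_def algebra_simps)
  qed
  have rhsi: "integrable M rhs" unfolding rhs_def using eni enDi by auto
  have "(\<integral>x. rhs x \<partial>M) = (exp m * (1 - m)) * Zn + exp m * (Zn * m)"
    unfolding rhs_def Zn_def using eni enDi enDint by (simp add: Zn_def)
  also have "\<dots> = exp m * Zn" by (simp add: algebra_simps)
  finally have "exp m * Zn \<le> Zt"
    using integral_mono[OF rhsi _ pt] ft(1) by (simp add: Zt_def e_def)
  then have "ln (exp m * Zn) \<le> ln Zt" using Znpos Ztpos by (subst ln_le_cancel_iff) auto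
  then have ineq: "m + ln Zn \<le> ln Zt" using Znpos by (simp add: ln_mult)
  have "m = inner th eta - inner thn eta" by (simp add: m_def inner_diff_left)
  then show ?thesis using ineq unfolding eta_def Zt_def Zn_def e_def en_def by linarith
qed

lemma ln_jensen:
  fixes w y :: "nat \<Rightarrow> real"
  assumes fin: "finite S" and wn: "\<forall>i\<in>S. w i \<ge> 0" and ws: "(\<Sum>i\<in>S. w i) = 1"
    and yp: "\<forall>i\<in>S. y i > 0" and mp: "(\<Sum>i\<in>S. w i * y i) > 0"
  shows "(\<Sum>i\<in>S. w i * ln (y i)) \<le> ln (\<Sum>i\<in>S. w i * y i)"
proof -
  define m where "m = (\<Sum>i\<in>S. w i * y i)"
  have mpos: "m > 0" using mp by (simp add: m_def)
  have "w i * ln (y i) \<le> w i * (y i / m - 1 + ln m)" if i: "i \<in> S" for i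
  proof -
    have "ln (y i / m) \<le> y i / m - 1" using yp i mpos by (intro ln_le_minus_one) simp
    moreover have "y i > 0" using yp i by auto
    ultimately have "ln (y i) \<le> y i / m - 1 + ln m" using mpos by (simp add: ln_div)
    then show ?thesis using wn i by (simp add: mult_left_mono)
  qed
  then have "(\<Sum>i\<in>S. w i * ln (y i)) \<le> (\<Sum>i\<in>S. w i * (y i / m - 1 + ln m))"
    by (rule sum_mono)
  also have "\<dots> = (\<Sum>i\<in>S. w i * y i) / m - (\<Sum>i\<in>S. w i) + (\<Sum>i\<in>S. w i) * ln m"
    by (simp add: algebra_simps sum.distrib sum_subtractf sum_distrib_right sum_distrib_left sum_divide_distrib)
  also have "\<dots> = ln m" using mpos ws by (simp add: m_def)
  finally show ?thesis by (simp add: m_def)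
qed

theorem proposition13:
  fixes M :: "'x measure" and T :: "'x \<Rightarrow> 'h::euclidean_space" and l :: real
    and N J :: nat and xs :: "nat \<Rightarrow> 'x" and xi :: "nat \<Rightarrow> real" and ths :: "nat \<Rightarrow> 'h"
    and j :: nat and thnew :: 'h
  defines "a \<equiv> 1 - l"
  defines "gam \<equiv> (\<lambda>jj x. xi jj * qdens M T l (ths jj) x /
                       (\<Sum>j'=1..J. xi j' * qdens M T l (ths j') x))"
  defines "Tbar \<equiv> (\<Sum>i=1..N. (gam j (xs i) / (\<Sum>i'=1..N. gam j (xs i'))) *\<^sub>R T (xs i))"
  defines "F \<equiv> (\<lambda>th. \<Sum>i=1..N. gam j (xs i) * ln (qdens M T l th (xs i)))"
  defines "G \<equiv> (\<lambda>th. ereal (\<Sum>i'=1..N. gam j (xs i')) * (clam l th Tbar - phi M T l th))"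
  assumes Tmeas: "T \<in> borel_measurable M"
    and alpha_pos: "a > 0"
    and A: "assumptionA M T l a"
    and B: "assumptionB M T l a"
    and xs_space: "\<forall>i\<in>{1..N}. xs i \<in> space M"
    and xs_supp: "\<forall>i\<in>{1..N}. \<forall>th\<in>dom_phi M T l. xs i \<in> supp M T l th"
    and J_pos: "J \<ge> 1"
    and xi_nonneg: "\<forall>jj\<in>{1..J}. xi jj \<ge> 0"
    and xi_sum: "(\<Sum>jj=1..J. xi jj) = 1"
    and ths_dom: "\<forall>jj\<in>{1..J}. ths jj \<in> dom_phi M T l"
    and j_range: "j \<in> {1..J}"
    and gam_pos: "(\<Sum>i'=1..N. gam j (xs i')) > 0"
    and new_dom: "thnew \<in> dom_phi M T l"
    and new_escort: "escort_mean M T l a thnew = Tbar"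
  shows "(l = 0 \<longrightarrow> (\<forall>th\<in>dom_phi M T l. F th \<le> F thnew))
       \<and> (l < 0 \<longrightarrow> (\<forall>th\<in>dom_phi M T l. G th \<le> G thnew)
                   \<and> (\<forall>th\<in>dom_phi M T l. G th \<le> ereal (F th)))
       \<and> (l > 0 \<longrightarrow> (\<forall>th\<in>dom_phi M T l. G th \<le> G thnew)
                   \<and> (\<forall>th\<in>dom_phi M T l. ereal (F th) \<le> G th))"
proof -
  define s where "s = (\<Sum>i'=1..N. gam j (xs i'))"
  define w where "w = (\<lambda>i. gam j (xs i) / s)"
  define Z where "Z = (\<lambda>th. \<integral>x. expc l th (T x) \<partial>M)"
  define cv where "cv = (\<lambda>(th::'h) (v::'h). if l = 0 then inner th v else ln (1 + l * inner th v) / l)"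
  define H where "H = (\<lambda>th. cv th Tbar - ln (Z th))"
  have spos: "s > 0" using gam_pos by (simp add: s_def)
  have qnn: "qdens M T l th x \<ge> 0" for th x by (simp add: qdens_def expc_eq)
  have gnn: "gam j x \<ge> 0" for x
    unfolding gam_def using xi_nonneg j_range qnn
    by (intro divide_nonneg_nonneg mult_nonneg_nonneg sum_nonneg) auto
  have wnn: "\<forall>i\<in>{1..N}. w i \<ge> 0" using gnn spos by (simp add: w_def)
  have ws: "(\<Sum>i=1..N. w i) = 1" using spos by (simp add: w_def s_def sum_divide_distrib[symmetric])
  have Tb: "Tbar = (\<Sum>i=1..N. w i *\<^sub>R T (xs i))" by (simp add: Tbar_def w_def s_def)
  have ypos: "1 + l * inner th (T (xs i)) > 0" if "th \<in> dom_phi M T l" "i \<in> {1..N}" for th i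
    using xs_supp that by (auto simp: supp_def)
  have tb: "1 + l * inner th Tbar = (\<Sum>i=1..N. w i * (1 + l * inner th (T (xs i))))" for th
    using ws by (simp add: Tb inner_sum_right algebra_simps sum.distrib sum_distrib_left)
  have tbpos: "1 + l * inner th Tbar > 0" if th: "th \<in> dom_phi M T l" for th
  proof -
    obtain i where i: "i \<in> {1..N}" "w i > 0"
    proof (rule ccontr)
      assume "\<not> thesis"
      then have "\<forall>i\<in>{1..N}. w i \<le> 0" using that by force
      then have "(\<Sum>i=1..N. w i) \<le> 0" by (intro sum_nonpos) auto
      then show False using ws by simp
    qed
    have "0 < (\<Sum>i=1..N. w i * (1 + l * inner th (T (xs i))))"
    proof (rule sum_pos2[of _ i])
      show "0 < w i * (1 + l * inner th (T (xs i)))" using i ypos[OF th i(1)] by simp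
      show "\<And>k. k \<in> {1..N} \<Longrightarrow> 0 \<le> w k * (1 + l * inner th (T (xs k)))"
        using wnn ypos[OF th] by (simp add: less_imp_le)
    qed (use i in auto)
    then show ?thesis by (simp add: tb)
  qed
  obtain S0 where S0: "\<forall>th\<in>dom_phi M T l. supp M T l th = S0"
    and comp: "\<And>th th'. th \<in> dom_phi M T l \<Longrightarrow> th' \<in> dom_phi M T l \<Longrightarrow> compat M T l a (qdens M T l th) th'"
    using B by (auto simp: assumptionB_def)
  have Geq: "G th = ereal (s * H th)" if th: "th \<in> dom_phi M T l" for th
  proof -
    have "clam l th Tbar = ereal (cv th Tbar)"
      using tbpos[OF th] by (simp add: clam_def cv_def)
    moreover have "phi M T l th = ereal (ln (Z th))" using dom_facts(3)[OF Tmeas A th] by (simp add: Z_def)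
    ultimately show ?thesis by (simp add: G_def H_def s_def)
  qed
  have Hle: "H th \<le> H thnew" if th: "th \<in> dom_phi M T l" for th
  proof (cases "l = 0")
    case True
    have "inner th (escort_mean M T 0 a thnew) - ln (\<integral>x. expc 0 th (T x) \<partial>M)
       \<le> inner thnew (escort_mean M T 0 a thnew) - ln (\<integral>x. expc 0 thnew (T x) \<partial>M)"
    proof -
      have A0: "assumptionA M T 0 a" using A True by simp
      have a1: "a = 1" using True a_def by simp
      have th0: "th \<in> dom_phi M T 0" using th True by simp
      have nd0: "thnew \<in> dom_phi M T 0" using new_dom True by simp
      have c0: "compat M T 0 a (qdens M T 0 thnew) thnew" using comp[OF new_dom new_dom] True by simp
      show ?thesis by (rule core_z[OF Tmeas A0 a1 th0 nd0 c0])
    qed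
    then show ?thesis using True new_escort by (simp add: H_def cv_def Z_def)
  next
    case False
    have "supp M T l th = supp M T l thnew" using S0 th new_dom by simp
    moreover have "1 + l * inner th (escort_mean M T l a thnew) > 0" using tbpos[OF th] new_escort by simp
    moreover have "1 + l * inner thnew (escort_mean M T l a thnew) > 0" using tbpos[OF new_dom] new_escort by simp
    ultimately have "ln (1 + l * inner th (escort_mean M T l a thnew)) / l - ln (\<integral>x. expc l th (T x) \<partial>M)
       \<le> ln (1 + l * inner thnew (escort_mean M T l a thnew)) / l - ln (\<integral>x. expc l thnew (T x) \<partial>M)"
      using core_nz[OF Tmeas A False a_def[THEN meta_eq_to_obj_eq] alpha_pos th new_dom _ comp[OF new_dom new_dom]] by blast
    then
    show ?thesis using False new_escort tbpos[OF th] tbpos[OF new_dom] by (simp add: H_def cv_def Z_def)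
  qed
  have Gle: "G th \<le> G thnew" if th: "th \<in> dom_phi M T l" for th
    using Hle[OF th] spos by (simp add: Geq[OF th] Geq[OF new_dom])
  have lnq: "ln (qdens M T l th (xs i)) = cv th (T (xs i)) - ln (Z th)"
    if th: "th \<in> dom_phi M T l" and i: "i \<in> {1..N}" for th i
  proof -
    have "expc l th (T (xs i)) = exp (cv th (T (xs i)))"
      using ypos[OF th i] by (simp add: expc_eq cv_def powr_def)
    moreover have "Z th > 0" using dom_facts(2)[OF Tmeas A th] by (simp add: Z_def)
    ultimately show ?thesis using dom_facts(4)[OF Tmeas A th] by (simp add: Z_def ln_div)
  qed
  have Feq: "F th = (\<Sum>i=1..N. gam j (xs i) * cv th (T (xs i))) - s * ln (Z th)"
    if th: "th \<in> dom_phi M T l" for th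
    by (simp add: F_def lnq[OF th] algebra_simps sum_subtractf sum_distrib_right sum_distrib_left s_def)
  have gw: "gam j (xs i) = s * w i" for i using spos by (simp add: w_def)
  have part1: "l = 0 \<longrightarrow> (\<forall>th\<in>dom_phi M T l. F th \<le> F thnew)"
  proof (intro impI ballI)
    fix th assume l0: "l = 0" and th: "th \<in> dom_phi M T l"
    have FH: "F t = s * H t" if t: "t \<in> dom_phi M T l" for t
    proof -
      have "(\<Sum>i=1..N. gam j (xs i) * cv t (T (xs i))) = s * inner t Tbar"
        using l0 by (simp add: cv_def gw Tb inner_sum_right sum_distrib_left algebra_simps)
      then show ?thesis using l0 by (simp add: Feq[OF t] H_def cv_def algebra_simps)
    qed
    show "F th \<le> F thnew" using Hle[OF th] spos by (simp add: FH th new_dom)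
  qed
  have jen: "(\<Sum>i=1..N. gam j (xs i) * ln (1 + l * inner th (T (xs i)))) \<le> s * ln (1 + l * inner th Tbar)"
    if th: "th \<in> dom_phi M T l" for th
  proof -
    have "(\<Sum>i=1..N. w i * ln (1 + l * inner th (T (xs i)))) \<le> ln (\<Sum>i=1..N. w i * (1 + l * inner th (T (xs i))))"
      using wnn ws ypos[OF th] tbpos[OF th] by (intro ln_jensen) (auto simp: tb)
    then have "s * (\<Sum>i=1..N. w i * ln (1 + l * inner th (T (xs i)))) \<le> s * ln (1 + l * inner th Tbar)"
      using spos by (simp add: tb)
    then show ?thesis by (simp add: gw sum_distrib_left algebra_simps)
  qed
  have Fnz: "F th = (\<Sum>i=1..N. gam j (xs i) * ln (1 + l * inner th (T (xs i)))) / l - s * ln (Z th)"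
    if th: "th \<in> dom_phi M T l" and l0: "l \<noteq> 0" for th
    using l0 by (simp add: Feq[OF th] cv_def sum_divide_distrib)
  have Gnz: "G th = ereal (s * ln (1 + l * inner th Tbar) / l - s * ln (Z th))"
    if th: "th \<in> dom_phi M T l" and l0: "l \<noteq> 0" for th
    using l0 by (simp add: Geq[OF th] H_def cv_def algebra_simps)
  have part2: "l < 0 \<longrightarrow> (\<forall>th\<in>dom_phi M T l. G th \<le> G thnew) \<and> (\<forall>th\<in>dom_phi M T l. G th \<le> ereal (F th))"
  proof (intro impI conjI ballI)
    fix th assume l0: "l < 0" and th: "th \<in> dom_phi M T l"
    show "G th \<le> G thnew" using Gle th by simp
    have "s * ln (1 + l * inner th Tbar) / l \<le> (\<Sum>i=1..N. gam j (xs i) * ln (1 + l * inner th (T (xs i)))) / l"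
      using jen[OF th] l0 by (simp add: divide_right_mono_neg)
    then show "G th \<le> ereal (F th)" using l0 by (simp add: Gnz[OF th] Fnz[OF th])
  qed
  have part3: "l > 0 \<longrightarrow> (\<forall>th\<in>dom_phi M T l. G th \<le> G thnew) \<and> (\<forall>th\<in>dom_phi M T l. ereal (F th) \<le> G th)"
  proof (intro impI conjI ballI)
    fix th assume l0: "l > 0" and th: "th \<in> dom_phi M T l"
    show "G th \<le> G thnew" using Gle th by simp
    have "(\<Sum>i=1..N. gam j (xs i) * ln (1 + l * inner th (T (xs i)))) / l \<le> s * ln (1 + l * inner th Tbar) / l"
      using jen[OF th] l0 by (simp add: divide_right_mono)
    then show "ereal (F th) \<le> G th" using l0 by (simp add: Gnz[OF th] Fnz[OF th])
  qed
  show ?thesis using part1 part2 part3 by blast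
qed

end
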